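(* Let $L$ be a principal element lattice and $n\ge1$. The following statements are equivalent: (1) Every proper element of $L$ is a strongly quasi $n$-absorbing element of $L$. (2) For all $a,b\in L$, $a^n=a^nb$ or $a^{n-1}b=a^nb$. (3) For all $a_1,a_2,\dots,a_{n+1}\in L$, $(a_1\wedge a_2\wedge\cdots\wedge a_n)^n\le a_1a_2\cdots a_{n+1}$ or $(a_1\wedge a_2\wedge\cdots\wedge a_n)^{n-1}a_{n+1}\le a_1a_2\cdots a_{n+1}$.
   Context: A multiplicative lattice is a complete lattice $L$ with least element $0$ and compact greatest element $1$, equipped with a commutative, associative product that distributes over arbitrary joins and has $1$ as multiplicative identity. For $x,y\in L$, $(x:y)=\bigvee\{z: zy\le x\}$. An element $e$ is principal if $a\wedge be=((a:e)\wedge b)e$ and $(ae\vee b):e=(b:e)\vee a$ for all $a,b\in L$; a principal element lattice is a multiplicative lattice in which every element is principal. $a^0=1$. A proper element $q$ ($q<1$) is strongly quasi $n$-absorbing if whenever $a,b\in L$ (not necessarily compact) satisfy $a^nb\le q$, then $a^n\le q$ or $a^{n-1}b\le q$. *)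

theory Defs
  imports Main
begin

class multiplicative_lattice = complete_lattice + comm_monoid_mult +
  assumes one_eq_top: "1 = top"
  assumes mult_Sup_distrib: "x * Sup S = Sup ((\<lambda>s. x * s) ` S)"
  assumes top_compact: "top \<le> Sup S \<Longrightarrow> \<exists>F. finite F \<and> F \<subseteq> S \<and> top \<le> Sup F"

definition residual :: "'a::multiplicative_lattice \<Rightarrow> 'a \<Rightarrow> 'a" where
  "residual x y = Sup {z. z * y \<le> x}"

definition principal :: "'a::multiplicative_lattice \<Rightarrow> bool" where
  "principal e \<longleftrightarrow>
     (\<forall>a b. inf a (b * e) = inf (residual a e) b * e) \<and>
     (\<forall>a b. residual (sup (a * e) b) e = sup (residual b e) a)"

definition principal_element_lattice :: "'a::multiplicative_lattice itself \<Rightarrow> bool" where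
  "principal_element_lattice _ \<longleftrightarrow> (\<forall>e::'a. principal e)"

definition strongly_quasi_n_absorbing :: "nat \<Rightarrow> 'a::multiplicative_lattice \<Rightarrow> bool" where
  "strongly_quasi_n_absorbing n q \<longleftrightarrow> q < top \<and>
     (\<forall>a b. a ^ n * b \<le> q \<longrightarrow> a ^ n \<le> q \<or> a ^ (n - 1) * b \<le> q)"

end

theory Submission
  imports Defs
begin

lemma ml_mult_mono:
  fixes x y z :: "'a::multiplicative_lattice"
  assumes "x \<le> y" shows "z * x \<le> z * y"
proof -
  have "z * Sup {x, y} = Sup ((\<lambda>s. z * s) ` {x, y})" by (rule mult_Sup_distrib)
  moreover have "Sup {x, y} = y" using assms by (simp add: sup_absorb2)
  ultimately have e: "sup (z * x) (z * y) = z * y" by simp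
  have "z * x \<le> sup (z * x) (z * y)" by (rule sup.cobounded1)
  also have "\<dots> = z * y" by (rule e)
  finally show ?thesis .
qed

lemma ml_mult_mono2:
  fixes x y u v :: "'a::multiplicative_lattice"
  assumes "x \<le> y" "u \<le> v" shows "x * u \<le> y * v"
proof -
  have "x * u \<le> x * v" using assms(2) by (rule ml_mult_mono)
  also have "x * v \<le> y * v" using ml_mult_mono[OF assms(1), of v] by (simp add: mult.commute)
  finally show ?thesis .
qed

lemma ml_mult_le:
  fixes x y :: "'a::multiplicative_lattice"
  shows "x * y \<le> x"
proof -
  have "x * y \<le> x * 1" by (rule ml_mult_mono) (simp add: one_eq_top)
  thus ?thesis by simp
qed

lemma ml_pow_le:
  fixes c :: "'a::multiplicative_lattice"
  assumes "\<And>i. 1 \<le> i \<Longrightarrow> i \<le> n \<Longrightarrow> c \<le> a i"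
  shows "k \<le> n \<Longrightarrow> c ^ k \<le> (\<Prod>i=1..k. a i)"
proof (induction k)
  case 0 then show ?case by simp
next
  case (Suc k)
  have "c ^ Suc k = c ^ k * c" by (simp add: mult.commute)
  also have "\<dots> \<le> (\<Prod>i=1..k. a i) * a (Suc k)"
    using Suc by (intro ml_mult_mono2) (auto intro: assms)
  also have "\<dots> = (\<Prod>i=1..Suc k. a i)" by (simp add: prod.cl_ivl_Suc)
  finally show ?case .
qed

theorem mainTheorem14:
  fixes n :: nat
  assumes "principal_element_lattice TYPE('a::multiplicative_lattice)"
    and "n \<ge> 1"
  shows "((\<forall>q::'a. q < top \<longrightarrow> strongly_quasi_n_absorbing n q) \<longleftrightarrow>
           (\<forall>a b::'a. a ^ n = a ^ n * b \<or> a ^ (n - 1) * b = a ^ n * b)) \<and>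
         ((\<forall>a b::'a. a ^ n = a ^ n * b \<or> a ^ (n - 1) * b = a ^ n * b) \<longleftrightarrow>
           (\<forall>a :: nat \<Rightarrow> 'a.
              (INF i\<in>{1..n}. a i) ^ n \<le> (\<Prod>i=1..n+1. a i) \<or>
              (INF i\<in>{1..n}. a i) ^ (n - 1) * a (n + 1) \<le> (\<Prod>i=1..n+1. a i)))"
proof -
  have pn: "\<And>x::'a. x ^ n = x ^ (n - 1) * x"
  proof -
    fix x :: 'a
    obtain m where m: "n = Suc m" using assms(2) by (cases n) auto
    show "x ^ n = x ^ (n - 1) * x" unfolding m by (simp only: power_Suc2 diff_Suc_1)
  qed
  have le1: "\<And>x b::'a. x ^ n * b \<le> x ^ n" by (rule ml_mult_le)
  have le2: "\<And>x b::'a. x ^ n * b \<le> x ^ (n - 1) * b"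
  proof -
    fix x b :: 'a
    have "x ^ n * b = (x ^ (n - 1) * b) * x" by (simp add: pn ac_simps)
    thus "x ^ n * b \<le> x ^ (n - 1) * b" by (simp add: ml_mult_le)
  qed
  let ?S2 = "\<forall>a b::'a. a ^ n = a ^ n * b \<or> a ^ (n - 1) * b = a ^ n * b"
  have A: "(\<forall>q::'a. q < top \<longrightarrow> strongly_quasi_n_absorbing n q) \<longleftrightarrow> ?S2"
  proof
    assume H: "\<forall>q::'a. q < top \<longrightarrow> strongly_quasi_n_absorbing n q"
    show ?S2
    proof (intro allI)
      fix a b :: 'a
      show "a ^ n = a ^ n * b \<or> a ^ (n - 1) * b = a ^ n * b"
      proof (cases "a ^ n * b = top")
        case True
        then have "a ^ n = top" using le1[of a b] by (metis top.extremum_uniqueI)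
        then show ?thesis using True by simp
      next
        case False
        then have "a ^ n * b < top" using top.not_eq_extremum by blast
        then have "a ^ n \<le> a ^ n * b \<or> a ^ (n - 1) * b \<le> a ^ n * b"
          using H unfolding strongly_quasi_n_absorbing_def by blast
        then show ?thesis using le1[of a b] le2[of a b] by (meson order_antisym)
      qed
    qed
  next
    assume H: ?S2
    show "\<forall>q::'a. q < top \<longrightarrow> strongly_quasi_n_absorbing n q"
    proof (intro allI impI)
      fix q :: 'a assume q: "q < top"
      show "strongly_quasi_n_absorbing n q" unfolding strongly_quasi_n_absorbing_def
      proof (intro conjI allI impI q)
        fix a b :: 'a assume "a ^ n * b \<le> q"
        then show "a ^ n \<le> q \<or> a ^ (n - 1) * b \<le> q" using H[rule_format, of a b] by auto
      qed
    qed
  qed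
  have B: "?S2 \<longleftrightarrow> (\<forall>a :: nat \<Rightarrow> 'a.
              (INF i\<in>{1..n}. a i) ^ n \<le> (\<Prod>i=1..n+1. a i) \<or>
              (INF i\<in>{1..n}. a i) ^ (n - 1) * a (n + 1) \<le> (\<Prod>i=1..n+1. a i))"
  proof
    assume H: ?S2
    show "\<forall>a :: nat \<Rightarrow> 'a.
              (INF i\<in>{1..n}. a i) ^ n \<le> (\<Prod>i=1..n+1. a i) \<or>
              (INF i\<in>{1..n}. a i) ^ (n - 1) * a (n + 1) \<le> (\<Prod>i=1..n+1. a i)"
    proof
      fix a :: "nat \<Rightarrow> 'a"
      define c where "c = (INF i\<in>{1..n}. a i)"
      have "c ^ n \<le> (\<Prod>i=1..n. a i)"
        by (rule ml_pow_le[where n=n and k=n]) (auto simp: c_def intro: INF_lower)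
      then have P: "c ^ n * a (n + 1) \<le> (\<Prod>i=1..n+1. a i)"
        using ml_mult_mono2[OF _ order_refl] by (simp add: prod.cl_ivl_Suc)
      show "c ^ n \<le> (\<Prod>i=1..n+1. a i) \<or> c ^ (n - 1) * a (n + 1) \<le> (\<Prod>i=1..n+1. a i)"
        using H[rule_format, of c "a (n+1)"] P by auto
    qed
  next
    assume H: "\<forall>a :: nat \<Rightarrow> 'a.
              (INF i\<in>{1..n}. a i) ^ n \<le> (\<Prod>i=1..n+1. a i) \<or>
              (INF i\<in>{1..n}. a i) ^ (n - 1) * a (n + 1) \<le> (\<Prod>i=1..n+1. a i)"
    show ?S2
    proof (intro allI)
      fix x b :: 'a
      define f where "f = (\<lambda>i::nat. if i \<le> n then x else b)"
      have I: "(INF i\<in>{1..n}. f i) = x"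
      proof -
        have "f ` {1..n} = {x}" using assms(2) by (auto simp: f_def image_def)
        thus ?thesis by simp
      qed
      have "(\<Prod>i=1..n. f i) = (\<Prod>i=1..n. x)" by (rule prod.cong) (auto simp: f_def)
      then have Pr: "(\<Prod>i=1..n+1. f i) = x ^ n * b"
        by (simp add: prod.cl_ivl_Suc f_def)
      have "x ^ n \<le> x ^ n * b \<or> x ^ (n - 1) * b \<le> x ^ n * b"
        using H[rule_format, of f] I Pr by (simp add: f_def)
      then show "x ^ n = x ^ n * b \<or> x ^ (n - 1) * b = x ^ n * b"
        using le1[of x b] le2[of x b] by (meson order_antisym)
    qed
  qed
  show ?thesis using A B by blast
qed

end
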